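(* Let $n,q$ be positive integers and $s_1,\dots,s_q\ge0$ integers with $\frac{q(q+1)}{2}+\sum_{k=1}^q k\,s_k=n$. Define $\overline{\alpha}_i=q-i+1+\sum_{k=i}^q s_k$ for $1\le i\le q$. Then: (1) $\overline{\alpha}=(\overline{\alpha}_1,\dots,\overline{\alpha}_q)\in\mathcal{P}(n)$; (2) $\overline{\alpha}_1>\overline{\alpha}_2>\cdots>\overline{\alpha}_q$; (3) $\delta(\overline{\alpha})=\big(1,2,\dots,q-1,q,q^{(s_q)},(q-1)^{(s_{q-1})},\dots,1^{(s_1)}\big)$; (4) $s_i=\overline{\alpha}_i-\overline{\alpha}_{i+1}-1$ for $1\le i\le q-1$, and $s_q=\overline{\alpha}_q-1$.
   Context: A partition of a positive integer $n$ is a finite non-increasing sequence $\alpha=(\alpha_1,\dots,\alpha_l)$ of positive integers with sum $n$; $\mathcal{P}(n)$ is the set of partitions of $n$, and $\alpha_i=0$ for $i>l$. The diagonal sequence is $\delta(\alpha)=(d_k)_{k\ge1}$ with $d_k=|\{i:1\le i\le k,\ \alpha_i+i-1\ge k\}|$, trailing zeros omitted. The notation $j^{(s)}$ denotes $s$ consecutive entries equal to $j$. *)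

theory Defs
  imports Main
begin

definition part :: "nat list \<Rightarrow> nat \<Rightarrow> nat" where
  "part \<alpha> i = (if 1 \<le> i \<and> i \<le> length \<alpha> then \<alpha> ! (i - 1) else 0)"

definition is_partition :: "nat \<Rightarrow> nat list \<Rightarrow> bool" where
  "is_partition n \<alpha> \<longleftrightarrow>
     (\<forall>x\<in>set \<alpha>. 0 < x) \<and> sorted_wrt (\<ge>) \<alpha> \<and> sum_list \<alpha> = n"

definition partitions :: "nat \<Rightarrow> nat list set" where
  "partitions n = {\<alpha>. is_partition n \<alpha>}"

definition diag_entry :: "nat list \<Rightarrow> nat \<Rightarrow> nat" where
  "diag_entry \<alpha> k = card {i. 1 \<le> i \<and> i \<le> k \<and> part \<alpha> i + i - 1 \<ge> k}"

text \<open>The diagonal sequence with trailing zeros omitted. For a partition of n,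
  d_k = 0 for all k > n, so listing d_1..d_n and dropping trailing zeros is the
  whole (finite part of the) sequence.\<close>
definition diag_seq :: "nat list \<Rightarrow> nat list" where
  "diag_seq \<alpha> = rev (dropWhile (\<lambda>x. x = 0)
      (rev (map (diag_entry \<alpha>) [1..<Suc (sum_list \<alpha>)])))"

end

theory Submission
  imports Defs
begin

lemma map_shift_upt: "map f [a+i..<a+j] = map (\<lambda>m. f (a+m)) [i..<j]"
  by (rule nth_equalityI) (auto simp: add.assoc)

lemma map_const_eq: "(\<And>x. x \<in> set xs \<Longrightarrow> f x = c) \<Longrightarrow> map f xs = replicate (length xs) c"
  by (induction xs) auto

lemma sum_Suc_top: "i \<le> Suc q \<Longrightarrow> (\<Sum>k=i..Suc q. s k) = (if i = Suc q then s (Suc q) else (\<Sum>k=i..q. (s::nat\<Rightarrow>nat) k) + s (Suc q))"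
  by (auto simp: sum.cl_ivl_Suc)

lemma concat_lemma:
  "map (\<lambda>m. card {i\<in>{1..q}. m \<le> (\<Sum>k=i..q. s k)}) [1..<Suc (\<Sum>k=1..q. s k)]
   = concat (map (\<lambda>j. replicate (s j) j) (rev [1..<Suc q]))"
proof (induction q)
  case 0
  then show ?case by simp
next
  case (Suc q)
  define a where "a = s (Suc q)"
  define b where "b = (\<Sum>k=1..q. s k)"
  have tot: "Suc (\<Sum>k=1..Suc q. s k) = Suc a + b" by (simp add: a_def b_def)
  have split: "[1..<Suc a + b] = [1..<Suc a] @ [Suc a..<Suc a + b]"
    by (rule upt_add_eq_append) simp
  have p1: "map (\<lambda>m. card {i\<in>{1..Suc q}. m \<le> (\<Sum>k=i..Suc q. s k)}) [1..<Suc a]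
      = replicate a (Suc q)"
  proof -
    have "card {i\<in>{1..Suc q}. m \<le> (\<Sum>k=i..Suc q. s k)} = Suc q" if "m \<in> set [1..<Suc a]" for m
    proof -
      have "{i\<in>{1..Suc q}. m \<le> (\<Sum>k=i..Suc q. s k)} = {1..Suc q}"
        using that by (auto simp: sum_Suc_top a_def)
      then show ?thesis by simp
    qed
    then show ?thesis by (subst map_const_eq) auto
  qed
  have p2: "map (\<lambda>m. card {i\<in>{1..Suc q}. m \<le> (\<Sum>k=i..Suc q. s k)}) [Suc a..<Suc a + b]
      = map (\<lambda>m. card {i\<in>{1..q}. m \<le> (\<Sum>k=i..q. s k)}) [1..<Suc b]"
  proof -
    have e: "map (\<lambda>m. card {i\<in>{1..Suc q}. m \<le> (\<Sum>k=i..Suc q. s k)}) [a+1..<a+Suc b]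
      = map (\<lambda>m. card {i\<in>{1..Suc q}. a + m \<le> (\<Sum>k=i..Suc q. s k)}) [1..<Suc b]"
      by (rule map_shift_upt)
    have "{i\<in>{1..Suc q}. a + m \<le> (\<Sum>k=i..Suc q. s k)} = {i\<in>{1..q}. m \<le> (\<Sum>k=i..q. s k)}"
      if "m \<in> set [1..<Suc b]" for m
      using that by (auto simp: sum_Suc_top a_def le_Suc_eq)
    then have "map (\<lambda>m. card {i\<in>{1..Suc q}. a + m \<le> (\<Sum>k=i..Suc q. s k)}) [1..<Suc b]
      = map (\<lambda>m. card {i\<in>{1..q}. m \<le> (\<Sum>k=i..q. s k)}) [1..<Suc b]"
      by (intro map_cong) auto
    with e show ?thesis by simp
  qed
  show ?case
    unfolding tot split map_append p1 p2 using Suc.IH by (simp add: a_def b_def)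
qed


lemma upt_split: "i \<le> j \<Longrightarrow> j \<le> k \<Longrightarrow> [i..<k] = [i..<j] @ [j..<k]"
  using upt_add_eq_append[of i j "k - j"] by simp

lemma gauss_sum: "(\<Sum>i=1..q. q - i + 1) = q * (q + 1) div (2::nat)"
proof (induction q)
  case 0 then show ?case by simp
next
  case (Suc q)
  have "(\<Sum>i=1..Suc q. Suc q - i + 1) = (\<Sum>i=1..q. Suc q - i + 1) + 1" by simp
  also have "(\<Sum>i=1..q. Suc q - i + 1) = (\<Sum>i=1..q. (q - i + 1) + 1)"
    by (rule sum.cong) auto
  also have "\<dots> = (\<Sum>i=1..q. q - i + 1) + (\<Sum>i=1..q. 1)" by (rule sum.distrib)
  also have "\<dots> = q * (q + 1) div 2 + q" using Suc.IH by simp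
  finally show ?case by simp
qed

lemma swap_sum: "(\<Sum>i=1..q. (\<Sum>k=i..q. s k)) = (\<Sum>k=1..q. k * (s k::nat))"
proof (induction q)
  case 0 then show ?case by simp
next
  case (Suc q)
  have "(\<Sum>i=1..Suc q. (\<Sum>k=i..Suc q. s k)) = (\<Sum>i=1..q. (\<Sum>k=i..Suc q. s k)) + s (Suc q)" by simp
  also have "(\<Sum>i=1..q. (\<Sum>k=i..Suc q. s k)) = (\<Sum>i=1..q. (\<Sum>k=i..q. s k) + s (Suc q))"
    by (rule sum.cong) (auto simp: sum_Suc_top)
  also have "\<dots> = (\<Sum>k=1..q. k * s k) + q * s (Suc q)" using Suc.IH by (simp add: sum.distrib)
  finally show ?case by simp
qed

theorem proposition2p3:
  fixes n q :: nat and s :: "nat \<Rightarrow> nat" and \<alpha> :: "nat list"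
  assumes "0 < n" and "0 < q"
    and "q * (q + 1) div 2 + (\<Sum>k=1..q. k * s k) = n"
    and "\<alpha> = map (\<lambda>i. q - i + 1 + (\<Sum>k=i..q. s k)) [1..<Suc q]"
  shows "\<alpha> \<in> partitions n
    \<and> (\<forall>i. 1 \<le> i \<and> i < q \<longrightarrow> part \<alpha> i > part \<alpha> (i + 1))
    \<and> diag_seq \<alpha> = [1..<Suc q] @ concat (map (\<lambda>j. replicate (s j) j) (rev [1..<Suc q]))
    \<and> (\<forall>i. 1 \<le> i \<and> i \<le> q - 1 \<longrightarrow>
           int (s i) = int (part \<alpha> i) - int (part \<alpha> (i + 1)) - 1)
    \<and> int (s q) = int (part \<alpha> q) - 1"
proof -
  define S where "S i = (\<Sum>k=i..q. s k)" for i
  have len: "length \<alpha> = q" using assms(4) by simp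
  have nth: "\<alpha> ! j = q - j + S (Suc j)" if "j < q" for j
    using that assms(4) by (simp del: upt_Suc add: S_def)
  have partf: "part \<alpha> i = (if 1 \<le> i \<and> i \<le> q then q - i + 1 + S i else 0)" for i
    using nth[of "i - 1"] by (auto simp: part_def len)
  have Sstep: "S i = s i + S (Suc i)" if "i \<le> q" for i
    using that by (simp add: S_def sum.atLeast_Suc_atMost)
  have Smono: "S j \<le> S i" if "i \<le> j" for i j
    unfolding S_def using that by (intro sum_mono2) auto
  have sumlist: "sum_list \<alpha> = n"
  proof -
    have "sum_list \<alpha> = (\<Sum>i=1..q. q - i + 1 + S i)"
      unfolding assms(4) sum_set_upt_conv_sum_list_nat[symmetric] atLeastLessThanSuc_atLeastAtMost S_def
      by (simp only: set_upt atLeastLessThanSuc_atLeastAtMost)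
    also have "\<dots> = (\<Sum>i=1..q. q - i + 1) + (\<Sum>i=1..q. S i)" by (rule sum.distrib)
    also have "\<dots> = n" using assms(3) gauss_sum[of q] swap_sum[of s q] by (simp add: S_def)
    finally show ?thesis .
  qed
  have P1: "\<alpha> \<in> partitions n"
  proof -
    have "\<forall>x\<in>set \<alpha>. 0 < x" using assms(4) by auto
    moreover have "sorted_wrt (\<ge>) \<alpha>"
      unfolding sorted_wrt_iff_nth_less
    proof (intro allI impI)
      fix i j assume "i < j" "j < length \<alpha>"
      then show "\<alpha> ! j \<le> \<alpha> ! i" using nth[of i] nth[of j] Smono[of "Suc i" "Suc j"] len by auto
    qed
    ultimately show ?thesis using sumlist by (simp add: partitions_def is_partition_def)
  qed
  have P2: "\<forall>i. 1 \<le> i \<and> i < q \<longrightarrow> part \<alpha> i > part \<alpha> (i + 1)"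
  proof (intro allI impI)
    fix i assume h: "1 \<le> i \<and> i < q"
    then have "part \<alpha> i = q - i + 1 + S i" "part \<alpha> (i+1) = q - (i+1) + 1 + S (Suc i)"
      using h by (auto simp: partf)
    then show "part \<alpha> i > part \<alpha> (i + 1)" using Sstep[of i] h by linarith
  qed
  have P4: "\<forall>i. 1 \<le> i \<and> i \<le> q - 1 \<longrightarrow>
           int (s i) = int (part \<alpha> i) - int (part \<alpha> (i + 1)) - 1"
  proof (intro allI impI)
    fix i assume h: "1 \<le> i \<and> i \<le> q - 1"
    then have pp: "part \<alpha> i = q - i + 1 + S i" "part \<alpha> (i+1) = q - (i+1) + 1 + S (Suc i)"
      using h by (auto simp: partf)
    then show "int (s i) = int (part \<alpha> i) - int (part \<alpha> (i + 1)) - 1"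
    proof -
      have iq: "i \<le> q" "i < q" using h by auto
      show ?thesis using pp iq
        by (simp add: Sstep[OF iq(1)] of_nat_diff)
    qed
  qed
  have P5: "int (s q) = int (part \<alpha> q) - 1"
    using assms(2) by (simp add: partf S_def)
  define N where "N = S 1"
  have diag: "diag_entry \<alpha> k = (if k \<le> q then k else card {i\<in>{1..q}. k - q \<le> S i})"
    if "1 \<le> k" for k
  proof -
    have pa: "part \<alpha> i + i - 1 = q + S i" if "1 \<le> i" "i \<le> q" for i
      using that by (simp add: partf)
    have pb: "part \<alpha> i = 0" if "q < i" for i
      using that by (simp add: partf)
    have "{i. 1 \<le> i \<and> i \<le> k \<and> part \<alpha> i + i - 1 \<ge> k}
        = (if k \<le> q then {1..k} else {i\<in>{1..q}. k - q \<le> S i})"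
    proof (cases "k \<le> q")
      case True
      then show ?thesis using pa by auto
    next
      case False
      have "i \<le> q" if "1 \<le> i" "i \<le> k" "part \<alpha> i + i - 1 \<ge> k" for i
        using that pb[of i] by (cases "q < i") auto
      then show ?thesis using False pa by fastforce
    qed
    then show ?thesis by (simp add: diag_entry_def)
  qed
  have qN: "q + N \<le> n"
  proof -
    have "\<alpha> ! 0 \<in> set \<alpha>" using len assms(2) by simp
    then have "\<alpha> ! 0 \<le> sum_list \<alpha>" using member_le_sum_list[of "\<alpha> ! 0" \<alpha>] by simp
    then show ?thesis using nth[of 0] assms(2) sumlist by (simp add: N_def)
  qed
  define L where "L = concat (map (\<lambda>j. replicate (s j) j) (rev [1..<Suc q]))"
  have mapeq: "map (diag_entry \<alpha>) [1..<Suc n] = [1..<Suc q] @ L @ replicate (n - (q + N)) 0"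
  proof -
    have sp: "[1..<Suc n] = [1..<Suc q] @ [Suc q..<Suc q + N] @ [Suc q + N..<Suc n]"
    proof -
      have a: "[Suc q..<Suc n] = [Suc q..<Suc q + N] @ [Suc q + N..<Suc n]"
        by (rule upt_split) (use qN in auto)
      have b: "[1..<Suc n] = [1..<Suc q] @ [Suc q..<Suc n]"
        by (rule upt_split) (use qN in auto)
      show ?thesis unfolding b a ..
    qed
    have m1: "map (diag_entry \<alpha>) [1..<Suc q] = [1..<Suc q]"
      by (rule map_idI) (auto simp: diag)
    have "map (diag_entry \<alpha>) [q+1..<q + Suc N] = map (\<lambda>m. diag_entry \<alpha> (q + m)) [1..<Suc N]"
      by (rule map_shift_upt)
    also have "\<dots> = map (\<lambda>m. card {i\<in>{1..q}. m \<le> (\<Sum>k=i..q. s k)}) [1..<Suc N]"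
      by (rule map_cong) (auto simp: diag S_def)
    also have "\<dots> = L" unfolding L_def N_def S_def by (rule concat_lemma)
    finally have m2: "map (diag_entry \<alpha>) [Suc q..<Suc q + N] = L" by simp
    have m3: "map (diag_entry \<alpha>) [Suc q + N..<Suc n] = replicate (n - (q + N)) 0"
    proof -
      have "diag_entry \<alpha> k = 0" if "k \<in> set [Suc q + N..<Suc n]" for k
      proof -
        have kk: "Suc q + N \<le> k" using that by auto
        have Sle: "S i \<le> N" if "1 \<le> i" for i using Smono[of 1 i] that N_def by simp
        have "{i\<in>{1..q}. k - q \<le> S i} = {}"
          using kk Sle by force
        moreover note kk
        ultimately show ?thesis using diag[of k] by simp
      qed
      then show ?thesis using qN by (subst map_const_eq) auto
    qed
    show ?thesis unfolding sp map_append m1 m2 m3 by simp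
  qed
  have nz: "\<forall>x\<in>set ([1..<Suc q] @ L). x \<noteq> 0" by (auto simp: L_def)
  have dw: "dropWhile (\<lambda>x. x = 0) xs = xs" if "\<forall>x\<in>set xs. x \<noteq> 0" for xs :: "nat list"
    using that by (cases xs) auto
  have P3: "diag_seq \<alpha> = [1..<Suc q] @ L"
  proof -
    have dr: "dropWhile (\<lambda>x. x = 0) (replicate r 0 @ ys) = dropWhile (\<lambda>x. x = 0) ys"
      for r and ys :: "nat list" by (induction r) auto
    have "diag_seq \<alpha> = rev (dropWhile (\<lambda>x. x = 0) (replicate (n - (q + N)) 0 @ rev ([1..<Suc q] @ L)))"
      unfolding diag_seq_def sumlist mapeq by (simp only: rev_append rev_replicate append_assoc)
    also have "\<dots> = [1..<Suc q] @ L" unfolding dr using dw[of "rev ([1..<Suc q] @ L)"] nz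
      by (simp only: set_rev rev_rev_ident)
    finally show ?thesis .
  qed
  show ?thesis using P1 P2 P3 P4 P5 by (simp add: L_def)
qed

end
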